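(* Let $1\le d<n$ be integers and $A\subseteq\mathbb{F}_2^n$. For a uniformly random $d$-flat $F$ in $\mathbb{F}_2^n$, \[\Pr\big[|A\cap F|\text{ is odd}\big]\le \frac12+\frac{1}{2(2^{n-d+1}-1)}.\]
   Context: A $d$-flat in $\mathbb{F}_2^n$ is a set $x_0+U$ with $x_0\in\mathbb{F}_2^n$ and $U$ a $d$-dimensional linear subspace of $\mathbb{F}_2^n$; "uniformly random $d$-flat" means uniform over the set of all such distinct sets. *)

theory Defs
  imports "HOL-Analysis.Analysis" "HOL-Library.Z2"
begin

text \<open>F_2^n is modelled as the type bit ^ 'n with n = CARD('n); F_2 is the field bit.\<close>

definition f2_scale :: "bit \<Rightarrow> bit ^ 'n \<Rightarrow> bit ^ 'n" where
  "f2_scale c x = (\<chi> i. c * x $ i)"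

lemma f2_vector_space: "vector_space (f2_scale :: bit \<Rightarrow> bit ^ 'n \<Rightarrow> bit ^ 'n)"
proof
  fix a b :: bit and x y :: "bit ^ 'n"
  show "f2_scale a (x + y) = f2_scale a x + f2_scale a y"
    unfolding f2_scale_def vec_eq_iff by (simp only: vec_lambda_beta vector_add_component distrib_left) simp
  show "f2_scale (a + b) x = f2_scale a x + f2_scale b x"
    unfolding f2_scale_def vec_eq_iff by (simp only: vec_lambda_beta vector_add_component distrib_right) simp
  show "f2_scale a (f2_scale b x) = f2_scale (a * b) x"
    unfolding f2_scale_def vec_eq_iff by (simp add: mult.assoc)
  show "f2_scale 1 x = x"
    unfolding f2_scale_def vec_eq_iff by simp
qed

definition flats :: "nat \<Rightarrow> (bit ^ 'n) set set" where
  "flats d = {(\<lambda>u. x0 + u) ` U | x0 U.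
     module.subspace f2_scale U \<and> vector_space.dim f2_scale U = d}"

end

theory Submission
  imports Defs
begin


instance bit :: finite
proof
  have "(UNIV::bit set) = {0,1}" by (auto intro: bit.exhaust)
  thus "finite (UNIV::bit set)" by (metis finite.emptyI finite.insertI)
qed

lemma bit_add_self: "(a::bit) + a = 0"
  by (cases a) simp_all

lemma vadd_self[simp]: "(x::bit^'n) + x = 0"
  by (simp add: vec_eq_iff bit_add_self)

lemma vadd_cancel1[simp]: "(x::bit^'n) + (x + y) = y"
  by (simp add: add.assoc[symmetric])

lemma vtwo[simp]: "2 * (x::bit^'n) = 0"
  by (simp only: mult_2 vadd_self)

lemma vminus_eq: "(x::bit^'n) - y = x + y"
  by (simp add: vec_eq_iff)

lemma f2_scale_0[simp]: "f2_scale 0 x = 0" by (simp add: f2_scale_def vec_eq_iff)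
lemma f2_scale_1[simp]: "f2_scale 1 x = x" by (simp add: f2_scale_def vec_eq_iff)

definition lin :: "(bit^'n) set \<Rightarrow> bool" where
  "lin U \<longleftrightarrow> 0 \<in> U \<and> (\<forall>x\<in>U. \<forall>y\<in>U. x + y \<in> U)"

fun sp :: "(bit^'n) list \<Rightarrow> (bit^'n) set" where
  "sp [] = {0}"
| "sp (v # vs) = sp vs \<union> (\<lambda>x. v + x) ` sp vs"

fun indep :: "(bit^'n) list \<Rightarrow> bool" where
  "indep [] = True"
| "indep (v # vs) = (indep vs \<and> v \<notin> sp vs)"

lemma sp_lin: "lin (sp vs)"
proof (induction vs)
  case Nil thus ?case by (simp add: lin_def)
next
  case (Cons v vs)
  have h: "\<forall>x\<in>sp vs. \<forall>y\<in>sp vs. x + y \<in> sp vs" "0 \<in> sp vs" using Cons by (auto simp: lin_def)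
  have "x + y \<in> sp (v # vs)" if "x \<in> sp (v#vs)" "y \<in> sp (v#vs)" for x y
  proof -
    have e: "(v + a) + (v + b) = a + b" "(v + a) + b = v + (a + b)" "a + (v + b) = v + (a + b)" for a b
      by (simp_all add: algebra_simps)
    show ?thesis using that h by (auto simp: e)
  qed
  thus ?case using h by (auto simp: lin_def)
qed

lemma sp_sub: "lin W \<Longrightarrow> set vs \<subseteq> W \<Longrightarrow> sp vs \<subseteq> W"
  by (induction vs) (auto simp: lin_def)

lemma set_sp: "set vs \<subseteq> sp vs"
proof (induction vs)
  case (Cons v vs)
  have "0 \<in> sp vs" using sp_lin[of vs] by (simp add: lin_def)
  hence "v \<in> sp (v # vs)" by (auto intro: image_eqI[where x=0])
  thus ?case using Cons by auto
qed simp

lemma finite_sets[simp]: "finite (S :: (bit^'n) set)"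
  by simp

lemma card_transl: "card ((\<lambda>u. (x::bit^'n) + u) ` S) = card S"
  by (rule card_image) (auto simp: inj_on_def)

lemma card_sp: "indep vs \<Longrightarrow> card (sp vs) = 2 ^ length vs"
proof (induction vs)
  case (Cons v vs)
  have dis: "sp vs \<inter> (\<lambda>x. v + x) ` sp vs = {}"
  proof (rule ccontr)
    assume "sp vs \<inter> (\<lambda>x. v + x) ` sp vs \<noteq> {}"
    then obtain a b where ab: "a \<in> sp vs" "b \<in> sp vs" "a = v + b" by auto
    hence "v = a + b" by (simp add: add.assoc)
    hence "v \<in> sp vs" using ab sp_lin[of vs] unfolding lin_def by metis
    thus False using Cons by simp
  qed
  have "card (sp (v#vs)) = card (sp vs) + card ((\<lambda>x. v + x) ` sp vs)"
    using dis by (simp add: card_Un_disjoint)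
  thus ?case using Cons by (simp add: card_transl)
qed simp



lemma subspace_iff_lin: "module.subspace f2_scale U \<longleftrightarrow> lin (U :: (bit^'n) set)"
proof -
  interpret V: vector_space "f2_scale :: bit \<Rightarrow> bit^'n \<Rightarrow> bit^'n" by (rule f2_vector_space)
  have "(\<forall>c. \<forall>x\<in>U. f2_scale c x \<in> U)" if "0 \<in> U"
  proof (intro allI ballI)
    fix c x assume "x \<in> U" thus "f2_scale c x \<in> U" using that by (cases c) simp_all
  qed
  thus ?thesis unfolding V.subspace_def lin_def by auto
qed

lemma span_sp: "module.span f2_scale (set vs) = sp (vs :: (bit^'n) list)"
proof -
  interpret V: vector_space "f2_scale :: bit \<Rightarrow> bit^'n \<Rightarrow> bit^'n" by (rule f2_vector_space)
  show ?thesis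
  proof (induction vs)
    case Nil thus ?case by simp
  next
    case (Cons v vs)
    have "V.span (set (v#vs)) = {x. \<exists>k. x - f2_scale k v \<in> V.span (set vs)}"
      using V.span_insert by simp
    also have "\<dots> = {x. x \<in> sp vs \<or> x + v \<in> sp vs}"
    proof -
      have "(\<exists>k. x - f2_scale k v \<in> sp vs) \<longleftrightarrow> (x \<in> sp vs \<or> x + v \<in> sp vs)" for x
      proof
        assume "\<exists>k. x - f2_scale k v \<in> sp vs"
        then obtain k where "x - f2_scale k v \<in> sp vs" by blast
        thus "x \<in> sp vs \<or> x + v \<in> sp vs" by (cases k) (simp_all add: vminus_eq)
      next
        assume "x \<in> sp vs \<or> x + v \<in> sp vs"
        thus "\<exists>k. x - f2_scale k v \<in> sp vs"
          by (metis f2_scale_0 f2_scale_1 vminus_eq diff_zero)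
      qed
      thus ?thesis using Cons by simp
    qed
    also have "\<dots> = sp (v # vs)"
    proof -
      have "x + v \<in> sp vs \<longleftrightarrow> x \<in> (\<lambda>y. v + y) ` sp vs" for x
      proof
        assume "x + v \<in> sp vs" thus "x \<in> (\<lambda>y. v + y) ` sp vs"
          by (intro image_eqI[where x="x+v"]) (simp_all add: add.commute add.left_commute)
      next
        assume "x \<in> (\<lambda>y. v + y) ` sp vs" thus "x + v \<in> sp vs"
          by (auto simp: add.commute add.left_commute)
      qed
      thus ?thesis by auto
    qed
    finally show ?case .
  qed
qed

lemma indep_of_independent:
  "distinct vs \<Longrightarrow> module.independent f2_scale (set vs) \<Longrightarrow> indep (vs :: (bit^'n) list)"
proof -
  interpret V: vector_space "f2_scale :: bit \<Rightarrow> bit^'n \<Rightarrow> bit^'n" by (rule f2_vector_space)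
  show "distinct vs \<Longrightarrow> V.independent (set vs) \<Longrightarrow> indep vs"
  proof (induction vs)
    case (Cons v vs)
    thus ?case using V.independent_insert[of v "set vs"] span_sp[of vs] by auto
  qed simp
qed

lemma card_subspace:
  assumes "module.subspace f2_scale (U :: (bit^'n) set)"
  shows "card U = 2 ^ vector_space.dim f2_scale U"
proof -
  interpret V: vector_space "f2_scale :: bit \<Rightarrow> bit^'n \<Rightarrow> bit^'n" by (rule f2_vector_space)
  obtain B where B: "B \<subseteq> U" "V.independent B" "U \<subseteq> V.span B" "card B = V.dim U"
    by (rule V.basis_exists)
  obtain vs where vs: "set vs = B" "distinct vs" using finite_distinct_list[of B] by auto
  have "V.span B = U" using V.span_subspace[OF B(1) B(3) assms] .
  hence "U = sp vs" using span_sp[of vs] vs by simp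
  moreover have "indep vs" using indep_of_independent[of vs] vs B(2) by blast
  ultimately have "card U = 2 ^ length vs" using card_sp by simp
  thus ?thesis using distinct_card[OF vs(2)] vs B by simp
qed

lemma flats_iff:
  "F \<in> flats d \<longleftrightarrow> (\<exists>x0 (U :: (bit^'n) set). F = (\<lambda>u. x0 + u) ` U \<and> lin U \<and> card U = 2 ^ d)"
proof -
  have "module.subspace f2_scale U \<and> vector_space.dim f2_scale U = d \<longleftrightarrow> lin U \<and> card U = 2 ^ d"
    for U :: "(bit^'n) set"
    using card_subspace[of U] subspace_iff_lin[of U] by auto
  thus ?thesis unfolding flats_def by blast
qed



definition LL :: "(bit^'n) set \<Rightarrow> nat \<Rightarrow> (bit^'n) list set" where
  "LL W k = {vs. length vs = k \<and> indep vs \<and> set vs \<subseteq> W}"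

lemma finite_LL[simp]: "finite (LL W k)"
proof (rule finite_subset)
  show "LL W k \<subseteq> {xs. set xs \<subseteq> UNIV \<and> length xs = k}" by (auto simp: LL_def)
  show "finite {xs. set xs \<subseteq> (UNIV :: (bit^'n) set) \<and> length xs = k}"
    by (rule finite_lists_length_eq) simp
qed

lemma LL_Suc: "LL W (Suc k) = (\<lambda>(vs,v). v # vs) ` (SIGMA vs:LL W k. W - sp vs)"
proof
  show "LL W (Suc k) \<subseteq> (\<lambda>(vs,v). v # vs) ` (SIGMA vs:LL W k. W - sp vs)"
  proof
    fix ws assume "ws \<in> LL W (Suc k)"
    then obtain v vs where "ws = v # vs" "length vs = k" "indep vs" "v \<notin> sp vs" "v \<in> W" "set vs \<subseteq> W"
      unfolding LL_def by (cases ws) auto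
    thus "ws \<in> (\<lambda>(vs,v). v # vs) ` (SIGMA vs:LL W k. W - sp vs)"
      by (intro image_eqI[where x="(vs,v)"]) (auto simp: LL_def)
  qed
  show "(\<lambda>(vs,v). v # vs) ` (SIGMA vs:LL W k. W - sp vs) \<subseteq> LL W (Suc k)"
    by (auto simp: LL_def)
qed

lemma inj_cons: "inj_on (\<lambda>(vs,v). v # vs) A"
  by (auto simp: inj_on_def)

lemma sum_LL_Suc:
  "(\<Sum>ws\<in>LL W (Suc k). h ws) = (\<Sum>vs\<in>LL W k. \<Sum>v\<in>W - sp vs. h (v # vs))"
proof -
  have "(\<Sum>ws\<in>LL W (Suc k). h ws) = (\<Sum>p\<in>(SIGMA vs:LL W k. W - sp vs). h ((\<lambda>(vs,v). v # vs) p))"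
    unfolding LL_Suc by (rule sum.reindex[OF inj_cons, unfolded comp_def])
  also have "\<dots> = (\<Sum>vs\<in>LL W k. \<Sum>v\<in>W - sp vs. h (v # vs))"
    by (subst sum.Sigma) (auto intro!: sum.cong split: prod.splits)
  finally show ?thesis .
qed

lemma card_LL:
  assumes "lin W" "card W = 2 ^ w" "k \<le> w"
  shows "card (LL W k) = (\<Prod>i<k. 2 ^ w - 2 ^ i)"
  using assms(3)
proof (induction k)
  case 0
  have "LL W 0 = {[]}" by (auto simp: LL_def)
  thus ?case by simp
next
  case (Suc k)
  have "card (LL W (Suc k)) = card (SIGMA vs:LL W k. W - sp vs)"
    unfolding LL_Suc by (rule card_image[OF inj_cons])
  also have "\<dots> = (\<Sum>vs\<in>LL W k. card (W - sp vs))" by simp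
  also have "\<dots> = (\<Sum>vs\<in>LL W k. 2 ^ w - 2 ^ k)"
  proof (rule sum.cong)
    fix vs assume "vs \<in> LL W k"
    hence "sp vs \<subseteq> W" "card (sp vs) = 2 ^ k" using sp_sub[OF assms(1)] card_sp by (auto simp: LL_def)
    thus "card (W - sp vs) = 2 ^ w - 2 ^ k" using assms(2) by (simp add: card_Diff_subset)
  qed simp
  also have "\<dots> = card (LL W k) * (2 ^ w - 2 ^ k)" by simp
  finally show ?case using Suc by simp
qed

lemma transl_eq:
  assumes "lin U" "x \<in> (\<lambda>u. x0 + u) ` U"
  shows "(\<lambda>u. x + u) ` U = (\<lambda>u. (x0::bit^'n) + u) ` U"
proof -
  obtain u0 where u0: "u0 \<in> U" "x = x0 + u0" using assms(2) by auto
  show ?thesis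
  proof
    show "(\<lambda>u. x + u) ` U \<subseteq> (\<lambda>u. x0 + u) ` U"
    proof
      fix y assume "y \<in> (\<lambda>u. x + u) ` U"
      then obtain u where "u \<in> U" "y = x + u" by auto
      thus "y \<in> (\<lambda>u. x0 + u) ` U" using u0 assms(1) unfolding lin_def
        by (intro image_eqI[where x="u0 + u"]) (auto simp: add.assoc)
    qed
    show "(\<lambda>u. x0 + u) ` U \<subseteq> (\<lambda>u. x + u) ` U"
    proof
      fix y assume "y \<in> (\<lambda>u. x0 + u) ` U"
      then obtain u where "u \<in> U" "y = x0 + u" by auto
      thus "y \<in> (\<lambda>u. x + u) ` U" using u0 assms(1) unfolding lin_def
        by (intro image_eqI[where x="u0 + u"]) (auto simp: add.assoc[symmetric])
    qed
  qed
qed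

lemma transl_inj: "(\<lambda>u. x + u) ` S = (\<lambda>u. (x::bit^'n) + u) ` U \<Longrightarrow> S = U"
proof -
  assume "(\<lambda>u. x + u) ` S = (\<lambda>u. (x::bit^'n) + u) ` U"
  moreover have "inj (\<lambda>u. x + u)" by (auto simp: inj_on_def)
  ultimately show "S = U" by (simp add: inj_image_eq_iff)
qed

lemma transl_eq2:
  assumes "lin S" "lin U" "(\<lambda>u. x + u) ` S = (\<lambda>u. (x0::bit^'n) + u) ` U"
  shows "S = U \<and> x \<in> (\<lambda>u. x0 + u) ` U"
proof -
  have xin: "x \<in> (\<lambda>u. x0 + u) ` U" using assms(1,3) unfolding lin_def
    by (metis add.right_neutral image_eqI)
  moreover have "S = U" using transl_eq[OF assms(2) xin] assms(3) transl_inj by metis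
  ultimately show ?thesis by simp
qed



lemma fiber:
  assumes "lin U" "card U = 2 ^ d"
  shows "{p \<in> LL UNIV d \<times> UNIV. (\<lambda>u. snd p + u) ` sp (fst p) = (\<lambda>u. x0 + u) ` U}
         = LL U d \<times> ((\<lambda>u. (x0::bit^'n) + u) ` U)"
proof (intro set_eqI iffI)
  fix p assume a: "p \<in> {p \<in> LL UNIV d \<times> UNIV. (\<lambda>u. snd p + u) ` sp (fst p) = (\<lambda>u. x0 + u) ` U}"
  obtain vs x where p: "p = (vs, x)" by (cases p)
  have "sp vs = U \<and> x \<in> (\<lambda>u. x0 + u) ` U"
    using transl_eq2[OF sp_lin assms(1)] a p by auto
  thus "p \<in> LL U d \<times> ((\<lambda>u. x0 + u) ` U)" using a p set_sp[of vs] by (auto simp: LL_def)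
next
  fix p assume a: "p \<in> LL U d \<times> ((\<lambda>u. x0 + u) ` U)"
  obtain vs x where p: "p = (vs, x)" by (cases p)
  have vs: "length vs = d" "indep vs" "set vs \<subseteq> U" and x: "x \<in> (\<lambda>u. x0 + u) ` U"
    using a p by (auto simp: LL_def)
  have "sp vs \<subseteq> U" using sp_sub[OF assms(1) vs(3)] .
  moreover have "card (sp vs) = card U" using card_sp[OF vs(2)] vs(1) assms(2) by simp
  ultimately have "sp vs = U" by (simp add: card_subset_eq)
  hence "(\<lambda>u. x + u) ` sp vs = (\<lambda>u. x0 + u) ` U" using transl_eq[OF assms(1) x] by simp
  thus "p \<in> {p \<in> LL UNIV d \<times> UNIV. (\<lambda>u. snd p + u) ` sp (fst p) = (\<lambda>u. x0 + u) ` U}"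
    using p vs by (auto simp: LL_def)
qed

lemma finite_flats[simp]: "finite (flats d :: (bit^'n) set set)"
  by (rule finite_subset[of _ "Pow UNIV"]) auto

lemma pushforward:
  fixes g :: "(bit^'n) set \<Rightarrow> real"
  shows "(\<Sum>vs\<in>LL UNIV d. \<Sum>x\<in>UNIV. g ((\<lambda>u. x + u) ` sp vs))
         = real (2 ^ d * (\<Prod>i<d. 2 ^ d - 2 ^ i)) * (\<Sum>F\<in>flats d. g F)"
proof -
  let ?S = "LL UNIV d \<times> (UNIV::(bit^'n) set)"
  let ?phi = "\<lambda>p. (\<lambda>u. snd p + u) ` sp (fst p)"
  let ?c = "2 ^ d * (\<Prod>i<d. 2 ^ d - 2 ^ i) :: nat"
  have "(\<Sum>vs\<in>LL UNIV d. \<Sum>x\<in>UNIV. g ((\<lambda>u. x + u) ` sp vs)) = (\<Sum>p\<in>?S. g (?phi p))"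
    by (simp add: sum.cartesian_product case_prod_beta)
  also have img: "?phi ` ?S \<subseteq> flats d"
  proof
    fix F assume "F \<in> ?phi ` ?S"
    then obtain vs x where "vs \<in> LL UNIV d" "F = (\<lambda>u. x + u) ` sp vs" by auto
    thus "F \<in> flats d" unfolding flats_iff using sp_lin card_sp by (auto simp: LL_def)
  qed
  hence "(\<Sum>p\<in>?S. g (?phi p)) = (\<Sum>F\<in>flats d. \<Sum>p\<in>{p. p \<in> ?S \<and> ?phi p = F}. g (?phi p))"
    by (intro sum.group[symmetric]) simp_all
  also have "\<dots> = (\<Sum>F\<in>flats d. real ?c * g F)"
  proof (rule sum.cong)
    fix F assume "F \<in> (flats d :: (bit^'n) set set)"
    then obtain x0 U where F: "F = (\<lambda>u. x0 + u) ` U" "lin U" "card U = 2 ^ d"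
      unfolding flats_iff by blast
    have fe: "{p. p \<in> ?S \<and> ?phi p = F} = LL U d \<times> F"
      using fiber[OF F(2,3), of x0] F(1) by simp
    have fc: "card (LL U d \<times> F) = ?c"
      using card_LL[OF F(2,3) order.refl] F card_transl[of x0 U] by (simp add: card_cartesian_product)
    have "(\<Sum>p\<in>{p. p \<in> ?S \<and> ?phi p = F}. g (?phi p)) = (\<Sum>p\<in>{p. p \<in> ?S \<and> ?phi p = F}. g F)"
      by (rule sum.cong) simp_all
    also have "\<dots> = real (card {p. p \<in> ?S \<and> ?phi p = F}) * g F" by simp
    also have "\<dots> = real ?c * g F" unfolding fe fc ..
    finally show "(\<Sum>p\<in>{p. p \<in> ?S \<and> ?phi p = F}. g (?phi p)) = real ?c * g F" .
  qed simp
  finally show ?thesis by (simp add: sum_distrib_left)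
qed



lemma card_bit: "CARD(bit) = 2"
proof -
  have "(UNIV::bit set) = {0,1}" by (auto intro: bit.exhaust)
  moreover have "card {0::bit, 1} = 2" by simp
  ultimately show ?thesis by metis
qed

lemma sq_sign: "((-1::real) ^ n) * ((-1) ^ n) = 1"
  by (simp add: power_add[symmetric])

lemma inner_bound:
  fixes A :: "(bit^'n) set" and vs :: "(bit^'n) list"
  assumes "indep vs"
  shows "(\<Sum>v\<in>UNIV - sp vs. \<Sum>x\<in>UNIV. (-1::real) ^ card (A \<inter> (\<lambda>u. x + u) ` sp (v # vs)))
          \<ge> - (2 ^ length vs * real CARD(bit^'n))"
proof -
  define b where "b = (\<lambda>S. (-1::real) ^ card (A \<inter> S))"
  define U where "U = sp vs"
  define G where "G = (\<lambda>x. (\<lambda>u. x + u) ` U)"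
  define Sg where "Sg = (\<Sum>y\<in>UNIV. b (G y))"
  have linU: "lin U" using sp_lin U_def by simp
  have cardU: "card U = 2 ^ length vs" using card_sp[OF assms] U_def by simp
  have split: "(\<lambda>u. x + u) ` sp (v # vs) = G x \<union> G (x + v)" for x v
    by (simp add: G_def U_def image_Un image_image add.assoc)
  have disj: "G x \<inter> G (x + v) = {}" if "v \<notin> U" for x v
  proof (rule ccontr)
    assume "G x \<inter> G (x + v) \<noteq> {}"
    then obtain y where y: "y \<in> G x" "y \<in> G (x + v)" by blast
    then obtain a c where ac: "a \<in> U" "c \<in> U" "y = x + a" "y = (x + v) + c"
      unfolding G_def by blast
    hence ac: "a \<in> U" "c \<in> U" "x + a = x + v + c" by simp_all
    hence "a = v + c" by (metis add.assoc add_left_cancel)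
    hence "v = a + c" by (simp add: add.assoc)
    hence "v \<in> U" using ac linU unfolding lin_def by metis
    thus False using that by simp
  qed
  have bmult: "b (G x \<union> G (x + v)) = b (G x) * b (G (x + v))" if "v \<notin> U" for x v
  proof -
    have "A \<inter> (G x \<union> G (x + v)) = (A \<inter> G x) \<union> (A \<inter> G (x + v))" by blast
    moreover have "(A \<inter> G x) \<inter> (A \<inter> G (x + v)) = {}" using disj[OF that] by blast
    ultimately have "card (A \<inter> (G x \<union> G (x + v))) = card (A \<inter> G x) + card (A \<inter> G (x + v))"
      by (simp add: card_Un_disjoint)
    thus ?thesis by (simp add: b_def power_add)
  qed
  have shiftU: "G (x + v) = G x" if "v \<in> U" for x v
  proof -
    have "x + v \<in> (\<lambda>u. x + u) ` U" using that by blast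
    thus ?thesis unfolding G_def by (rule transl_eq[OF linU])
  qed
  have shiftsum: "(\<Sum>v\<in>UNIV. b (G (x + v))) = Sg" for x
    unfolding Sg_def
    by (rule sum.reindex_bij_witness[of _ "\<lambda>y. x + y" "\<lambda>y. x + y"]) simp_all
  have inner: "(\<Sum>v\<in>UNIV - U. b (G (x + v))) = Sg - 2 ^ length vs * b (G x)" for x
  proof -
    have "(\<Sum>v\<in>UNIV - U. b (G (x + v))) = (\<Sum>v\<in>UNIV. b (G (x + v))) - (\<Sum>v\<in>U. b (G (x + v)))"
      by (rule sum_diff) simp_all
    also have "(\<Sum>v\<in>U. b (G (x + v))) = (\<Sum>v\<in>U. b (G x))" by (rule sum.cong) (simp_all add: shiftU)
    also have "\<dots> = 2 ^ length vs * b (G x)" using cardU by simp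
    finally show ?thesis using shiftsum by simp
  qed
  have "(\<Sum>v\<in>UNIV - sp vs. \<Sum>x\<in>UNIV. (-1::real) ^ card (A \<inter> (\<lambda>u. x + u) ` sp (v # vs)))
        = (\<Sum>v\<in>UNIV - U. \<Sum>x\<in>UNIV. b (G x) * b (G (x + v)))"
    unfolding U_def[symmetric] split
    using bmult unfolding b_def
    by (intro sum.cong) simp_all
  also have "\<dots> = (\<Sum>x\<in>UNIV. b (G x) * (\<Sum>v\<in>UNIV - U. b (G (x + v))))"
    by (subst sum.swap) (simp add: sum_distrib_left)
  also have "\<dots> = (\<Sum>x\<in>UNIV. b (G x) * Sg - 2 ^ length vs * (b (G x) * b (G x)))"
    by (simp add: inner algebra_simps)
  also have "\<dots> = Sg * Sg - 2 ^ length vs * real CARD(bit^'n)"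
    by (simp add: sum_subtractf b_def sq_sign sum_distrib_right[symmetric] Sg_def mult.commute)
  also have "\<dots> \<ge> - (2 ^ length vs * real CARD(bit^'n))" by simp
  finally show ?thesis .
qed



lemma arith_final:
  fixes c Q P L D T K E :: real
  assumes "c > 0" "L > 0" "D > 0" "T > 0" "K > 0"
    "c * (Q - 2 * P) \<ge> - (K * T * L)" "c * Q = L * D * T" "E = D / K"
  shows "P / Q \<le> 1/2 + 1 / (2 * E)"
proof -
  have Epos: "E > 0" using assms by simp
  have Q: "Q = L * D * T / c" using assms(1,7) by (simp add: field_simps)
  have Qpos: "Q > 0" unfolding Q using assms by simp
  have "2 * P \<le> Q + K * T * L / c" using assms(1,6) by (simp add: field_simps)
  hence "P / Q \<le> (Q + K * T * L / c) / (2 * Q)" using Qpos by (simp add: field_simps)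
  also have "\<dots> = 1/2 + K * T * L / (2 * c * Q)" using Qpos assms(1) by (simp add: field_simps)
  also have "K * T * L / (2 * c * Q) = K / (2 * D)" unfolding Q using assms by (simp add: field_simps)
  also have "K / (2 * D) = 1 / (2 * E)" using assms(3,5) unfolding assms(8) by (simp add: field_simps)
  finally show ?thesis .
qed

lemma sign_if: "(-1::real) ^ n = 1 - 2 * (if odd n then 1 else 0)"
  by (cases "even n") simp_all

theorem lemma4p1:
  fixes A :: "(bit ^ 'n) set" and d :: nat
  assumes "1 \<le> d" and "d < CARD('n)"
  shows "real (card {F \<in> (flats d :: (bit ^ 'n) set set). odd (card (A \<inter> F))})
           / real (card (flats d :: (bit ^ 'n) set set))
         \<le> 1/2 + 1 / (2 * (2 ^ (CARD('n) - d + 1) - 1))"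
proof -
  define N where "N = CARD('n)"
  obtain k where d: "d = Suc k" using assms(1) by (cases d) auto
  have kN: "k < N" "Suc k \<le> N" using assms(2) d N_def by simp_all
  define b where "b = (\<lambda>S. (-1::real) ^ card (A \<inter> S))"
  define c where "c = (2 ^ d * (\<Prod>i<d. 2 ^ d - 2 ^ i) :: nat)"
  define P where "P = card {F \<in> (flats d :: (bit ^ 'n) set set). odd (card (A \<inter> F))}"
  define Q where "Q = card (flats d :: (bit ^ 'n) set set)"
  define L where "L = card (LL (UNIV :: (bit^'n) set) k)"
  have cpos: "c > 0" unfolding c_def
    by (intro mult_pos_pos prod_pos) (auto simp: power_strict_increasing_iff)
  have T: "CARD(bit^'n) = 2 ^ N" using card_bit N_def by simp
  have linU: "lin (UNIV :: (bit^'n) set)" by (simp add: lin_def)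
  have Lk: "L = (\<Prod>i<k. 2 ^ N - 2 ^ i)"
    unfolding L_def using card_LL[OF linU T] kN by simp
  have Lpos: "L > 0" unfolding Lk
    by (intro prod_pos) (use kN in \<open>auto simp: power_strict_increasing_iff\<close>)
  have Ld: "card (LL (UNIV :: (bit^'n) set) d) = L * (2 ^ N - 2 ^ k)"
    unfolding Lk d using card_LL[OF linU T kN(2)] by simp
  have sum1: "real c * (\<Sum>F\<in>flats d. b F) \<ge> - (2 ^ k * 2 ^ N * real L)"
  proof -
    have "real c * (\<Sum>F\<in>flats d. b F)
        = (\<Sum>vs\<in>LL UNIV d. \<Sum>x\<in>UNIV. b ((\<lambda>u. x + u) ` sp vs))"
      using pushforward[of b d] c_def by simp
    also have "\<dots> = (\<Sum>vs\<in>LL UNIV k. \<Sum>v\<in>UNIV - sp vs. \<Sum>x\<in>UNIV. b ((\<lambda>u. x + u) ` sp (v # vs)))"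
      unfolding d by (rule sum_LL_Suc)
    also have "\<dots> \<ge> (\<Sum>vs\<in>LL (UNIV :: (bit^'n) set) k. - (2 ^ k * 2 ^ N))"
    proof (rule sum_mono)
      fix vs assume "vs \<in> LL (UNIV :: (bit^'n) set) k"
      hence "indep vs" "length vs = k" by (auto simp: LL_def)
      thus "- (2 ^ k * 2 ^ N) \<le> (\<Sum>v\<in>UNIV - sp vs. \<Sum>x\<in>UNIV. b ((\<lambda>u. x + u) ` sp (v # vs)))"
        using inner_bound[of vs A] unfolding T b_def by simp
    qed
    also have "(\<Sum>vs\<in>LL (UNIV :: (bit^'n) set) k. - (2 ^ k * 2 ^ N)) = - (2 ^ k * 2 ^ N * real L)"
      by (simp add: L_def)
    finally show ?thesis .
  qed
  have sum2: "real c * real Q = real L * (2 ^ N - 2 ^ k) * 2 ^ N"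
  proof -
    have "real c * real Q = (\<Sum>vs\<in>LL (UNIV :: (bit^'n) set) d. \<Sum>x\<in>(UNIV::(bit^'n) set). (1::real))"
      using pushforward[of "\<lambda>_::(bit^'n) set. 1" d] c_def Q_def by simp
    also have "\<dots> = real (card (LL (UNIV :: (bit^'n) set) d)) * 2 ^ N" using T by simp
    also have "\<dots> = real L * (2 ^ N - 2 ^ k) * 2 ^ N"
      unfolding Ld using kN by (simp add: of_nat_diff)
    finally show ?thesis .
  qed
  have sumb: "(\<Sum>F\<in>flats d. b F) = real Q - 2 * real P"
  proof -
    have "(\<Sum>F\<in>flats d. b F) = (\<Sum>F\<in>flats d. 1 - 2 * (if odd (card (A \<inter> F)) then 1 else 0))"
      unfolding b_def sign_if ..
    also have "\<dots> = real Q - 2 * (\<Sum>F\<in>flats d. (if odd (card (A \<inter> F)) then 1 else 0))"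
      by (simp add: sum_subtractf sum_distrib_left Q_def)
    also have "(\<Sum>F\<in>flats d. (if odd (card (A \<inter> F)) then 1 else 0)) = real P"
      unfolding P_def by (simp add: sum.inter_filter[symmetric])
    finally show ?thesis .
  qed
  have E: "(2::real) ^ (N - d + 1) - 1 = (2 ^ N - 2 ^ k) / 2 ^ k"
  proof -
    have "N - d + 1 = N - k" using d kN by simp
    moreover have "(2::real) ^ N = 2 ^ (N - k) * 2 ^ k" using kN by (simp add: power_add[symmetric])
    ultimately show ?thesis by (simp add: field_simps)
  qed
  have "real P / real Q \<le> 1/2 + 1 / (2 * ((2::real) ^ (N - d + 1) - 1))"
    apply (rule arith_final[where c="real c" and L="real L" and D="2 ^ N - 2 ^ k" and T="2 ^ N" and K="2 ^ k"])
    using cpos Lpos kN sum1 sum2 sumb E by (simp_all add: mult.commute mult.left_commute)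
  thus ?thesis unfolding P_def Q_def N_def .
qed

end
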